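(* Let $Z$ be a uniform read-$d$-times NBP and let $X\subseteq V(Z)$ separate two disjoint subsets $Y_1,Y_2$ of $Vars(Z)$. Let $Y'_1\subseteq Y_1$, $Y'_2\subseteq Y_2$, let $S$ be an assignment (set of literals) to $Vars(Z)\setminus(Y_1\cup Y_2)$, and let $Q',Q''$ be computational paths of $Z$ passing through all vertices of $X$ with $S\subseteq A(Q')\cap A(Q'')$, such that $Q'$ assigns all variables of $Y'_1$ negatively and $Q''$ assigns all variables of $Y'_2$ negatively. Then there is a computational path $Q^*$ of $Z$ passing through all vertices of $X$ with $S\subseteq A(Q^* )$ that assigns all variables of $Y'_1\cup Y'_2$ negatively.
   Context: An NBP $Z$ is a directed acyclic multigraph with one source and one sink, some edges labelled with literals; $Vars(Z)$ is the set of variables labelling edges. A source-sink path $P$ is computational if no variable occurs on it with both signs; $A(P)$ is the set of literals labelling its edges; $P$ assigns a variable $y$ negatively if $\neg y\in A(P)$. Read-$d$-times: each variable labels at most $d$ edges of each source-sink path; uniform: exactly $d$. A partition of a path $P$ is a sequence $P_1,\dots,P_c$ of subpaths with $P_1$ a prefix, $P_c$ a suffix, and the first vertex of $P_i$ equal to the last vertex of $P_{i-1}$; the set $X$ of the ends of $P_1,\dots,P_{c-1}$ generates this partition. A set $X\subseteq V(Z)$ not containing the source or sink separates disjoint sets $Y_1,Y_2$ of variables if there is a computational path $P$ through all vertices of $X$ such that, in the partition $P_1,\dots,P_{|X|+1}$ generated by $X$ on $P$, either variables of $Y_1$ label edges only of $P_i$ with $i$ odd and variables of $Y_2$ only of $P_i$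 with $i$ even, or vice versa. *)

theory Defs
  imports Main
begin

datatype 'x lit = Pos 'x | Neg 'x

fun var :: "'x lit \<Rightarrow> 'x" where
  "var (Pos x) = x" | "var (Neg x) = x"

record ('v, 'e, 'x) nbp =
  verts :: "'v set"
  edges :: "'e set"
  tail :: "'e \<Rightarrow> 'v"
  head :: "'e \<Rightarrow> 'v"
  lab :: "'e \<Rightarrow> 'x lit option"
  src :: 'v
  snk :: 'v

fun walk :: "('v, 'e, 'x) nbp \<Rightarrow> 'v \<Rightarrow> 'e list \<Rightarrow> 'v \<Rightarrow> bool" where
  "walk Z u [] v = (u = v \<and> u \<in> verts Z)"
| "walk Z u (e # es) v = (e \<in> edges Z \<and> tail Z e = u \<and> walk Z (head Z e) es v)"

definition is_nbp :: "('v, 'e, 'x) nbp \<Rightarrow> bool" where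
  "is_nbp Z \<longleftrightarrow> finite (verts Z) \<and> finite (edges Z)
     \<and> (\<forall>e\<in>edges Z. tail Z e \<in> verts Z \<and> head Z e \<in> verts Z)
     \<and> (\<forall>u es. es \<noteq> [] \<longrightarrow> \<not> walk Z u es u)
     \<and> src Z \<in> verts Z \<and> snk Z \<in> verts Z
     \<and> (\<forall>v\<in>verts Z. (\<not> (\<exists>e\<in>edges Z. head Z e = v)) \<longleftrightarrow> v = src Z)
     \<and> (\<forall>v\<in>verts Z. (\<not> (\<exists>e\<in>edges Z. tail Z e = v)) \<longleftrightarrow> v = snk Z)"

definition Vars :: "('v, 'e, 'x) nbp \<Rightarrow> 'x set" where
  "Vars Z = {x. \<exists>e\<in>edges Z. \<exists>l. lab Z e = Some l \<and> var l = x}"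

definition ss_path :: "('v, 'e, 'x) nbp \<Rightarrow> 'e list \<Rightarrow> bool" where
  "ss_path Z P \<longleftrightarrow> walk Z (src Z) P (snk Z)"

definition pverts :: "('v, 'e, 'x) nbp \<Rightarrow> 'e list \<Rightarrow> 'v list" where
  "pverts Z P = src Z # map (head Z) P"

definition A :: "('v, 'e, 'x) nbp \<Rightarrow> 'e list \<Rightarrow> 'x lit set" where
  "A Z P = {l. \<exists>e\<in>set P. lab Z e = Some l}"

definition computational :: "('v, 'e, 'x) nbp \<Rightarrow> 'e list \<Rightarrow> bool" where
  "computational Z P \<longleftrightarrow> \<not> (\<exists>x. Pos x \<in> A Z P \<and> Neg x \<in> A Z P)"

definition labels_var :: "('v, 'e, 'x) nbp \<Rightarrow> 'x \<Rightarrow> 'e \<Rightarrow> bool" where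
  "labels_var Z x e \<longleftrightarrow> (\<exists>l. lab Z e = Some l \<and> var l = x)"

definition uniform_read :: "('v, 'e, 'x) nbp \<Rightarrow> nat \<Rightarrow> bool" where
  "uniform_read Z d \<longleftrightarrow> (\<forall>P. ss_path Z P \<longrightarrow>
     (\<forall>x\<in>Vars Z. length (filter (labels_var Z x) P) = d))"

definition partition_gen :: "('v, 'e, 'x) nbp \<Rightarrow> 'e list \<Rightarrow> 'v set \<Rightarrow> 'e list list \<Rightarrow> bool" where
  "partition_gen Z P X Ps \<longleftrightarrow> concat Ps = P \<and> (\<forall>p\<in>set Ps. p \<noteq> [])
     \<and> length Ps = card X + 1
     \<and> set (map (\<lambda>p. head Z (last p)) (butlast Ps)) = X"

definition alternating :: "('v, 'e, 'x) nbp \<Rightarrow> 'e list list \<Rightarrow> 'x set \<Rightarrow> 'x set \<Rightarrow> bool" where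
  "alternating Z Ps Y1 Y2 \<longleftrightarrow> (\<forall>i<length Ps. \<forall>e\<in>set (Ps ! i).
     (\<forall>x\<in>Y1. labels_var Z x e \<longrightarrow> even i) \<and> (\<forall>x\<in>Y2. labels_var Z x e \<longrightarrow> odd i))"
  \<comment> \<open>index i is 0-based, so even i means P_(i+1) has odd index\<close>

definition separates :: "('v, 'e, 'x) nbp \<Rightarrow> 'v set \<Rightarrow> 'x set \<Rightarrow> 'x set \<Rightarrow> bool" where
  "separates Z X Y1 Y2 \<longleftrightarrow> X \<subseteq> verts Z \<and> src Z \<notin> X \<and> snk Z \<notin> X \<and>
     (\<exists>P Ps. ss_path Z P \<and> computational Z P \<and> X \<subseteq> set (pverts Z P)
        \<and> partition_gen Z P X Ps
        \<and> (alternating Z Ps Y1 Y2 \<or> alternating Z Ps Y2 Y1))"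

definition assignment :: "'x lit set \<Rightarrow> 'x set \<Rightarrow> bool" where
  "assignment S W \<longleftrightarrow> (\<forall>l\<in>S. var l \<in> W) \<and>
     (\<forall>x\<in>W. (Pos x \<in> S \<or> Neg x \<in> S) \<and> \<not> (Pos x \<in> S \<and> Neg x \<in> S))"

end

theory Submission
  imports Defs
begin


lemma cnt_concat: "length (filter f (concat Ls)) = (\<Sum>l\<leftarrow>Ls. length (filter f l))"
  by (induction Ls) simp_all

lemma nbp_ev: "is_nbp Z \<Longrightarrow> e \<in> edges Z \<Longrightarrow> tail Z e \<in> verts Z \<and> head Z e \<in> verts Z"
  unfolding is_nbp_def by (elim conjE) (rule bspec)
lemma acyc: "is_nbp Z \<Longrightarrow> es \<noteq> [] \<Longrightarrow> \<not> walk Z u es u"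
  unfolding is_nbp_def by (elim conjE) blast
lemma nbp_src: "is_nbp Z \<Longrightarrow> src Z \<in> verts Z"
  unfolding is_nbp_def by (elim conjE)
lemma walk_verts: "is_nbp Z \<Longrightarrow> walk Z u es v \<Longrightarrow> u \<in> verts Z \<and> v \<in> verts Z"
  by (induction es arbitrary: u) (auto dest: nbp_ev)

lemma walk_edges: "walk Z u es v \<Longrightarrow> set es \<subseteq> edges Z"
  by (induction es arbitrary: u) auto

lemma walk_append1: "walk Z u xs w \<Longrightarrow> walk Z w ys v \<Longrightarrow> walk Z u (xs @ ys) v"
  by (induction xs arbitrary: u) auto

lemma walk_append2: "walk Z u (xs @ ys) v \<Longrightarrow> is_nbp Z \<Longrightarrow> \<exists>w. walk Z u xs w \<and> walk Z w ys v"
  by (induction xs arbitrary: u) (auto dest: walk_verts)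

lemma walk_split: "is_nbp Z \<Longrightarrow> walk Z u Q v \<Longrightarrow> w \<in> set (u # map (head Z) Q) \<Longrightarrow>
   \<exists>Q1 Q2. Q = Q1 @ Q2 \<and> walk Z u Q1 w \<and> walk Z w Q2 v"
proof (induction Q arbitrary: u)
  case Nil then show ?case by auto
next
  case (Cons e Q)
  show ?case
  proof (cases "w = u")
    case True
    then show ?thesis using Cons.prems walk_verts[OF Cons.prems(1,2)]
      by (intro exI[of _ "[]"] exI[of _ "e#Q"]) auto
  next
    case False
    then have "w \<in> set (head Z e # map (head Z) Q)" using Cons.prems(3) by auto
    moreover have "walk Z (head Z e) Q v" using Cons.prems(2) by simp
    ultimately obtain Q1 Q2 where "Q = Q1 @ Q2" "walk Z (head Z e) Q1 w" "walk Z w Q2 v"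
      using Cons.IH Cons.prems(1) by blast
    then show ?thesis using Cons.prems(2) by (intro exI[of _ "e#Q1"] exI[of _ Q2]) auto
  qed
qed

lemma walk_last_in: "walk Z u Q v \<Longrightarrow> v \<in> set (u # map (head Z) Q)"
  by (induction Q arbitrary: u) auto

lemma walk_last_head: "walk Z u p w \<Longrightarrow> p \<noteq> [] \<Longrightarrow> w = head Z (last p)"
proof (induction p arbitrary: u)
  case Nil then show ?case by simp
next
  case (Cons e p) then show ?case by (cases p) auto
qed

definition reach where "reach Z a b \<longleftrightarrow> (\<exists>es. es \<noteq> [] \<and> walk Z a es b)"

definition chainwalk :: "('v,'e,'x) nbp \<Rightarrow> 'v list \<Rightarrow> 'e list list \<Rightarrow> bool" where
  "chainwalk Z ws Qs \<longleftrightarrow> length ws = Suc (length Qs) \<and>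
     (\<forall>j<length Qs. walk Z (ws!j) (Qs!j) (ws!Suc j))"

lemma chainwalk_Cons: "chainwalk Z (u # ws) (p # Qs) \<longleftrightarrow>
   ws \<noteq> [] \<and> walk Z u p (hd ws) \<and> chainwalk Z ws Qs"
proof
  assume H: "chainwalk Z (u # ws) (p # Qs)"
  then have l: "length ws = Suc (length Qs)" by (simp add: chainwalk_def)
  then have ne: "ws \<noteq> []" by auto
  have "walk Z ((u#ws)!0) ((p#Qs)!0) ((u#ws)!Suc 0)"
    using H unfolding chainwalk_def by (metis length_Cons zero_less_Suc)
  then have "walk Z u p (hd ws)" using ne by (simp add: hd_conv_nth)
  moreover have "chainwalk Z ws Qs"
    unfolding chainwalk_def
  proof (intro conjI allI impI)
    show "length ws = Suc (length Qs)" by (rule l)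
    fix j assume "j < length Qs"
    then have "Suc j < length (p # Qs)" by simp
    then have "walk Z ((u#ws)!Suc j) ((p#Qs)!Suc j) ((u#ws)!Suc (Suc j))"
      using H unfolding chainwalk_def by blast
    then show "walk Z (ws ! j) (Qs ! j) (ws ! Suc j)" by simp
  qed
  ultimately show "ws \<noteq> [] \<and> walk Z u p (hd ws) \<and> chainwalk Z ws Qs" using ne by blast
next
  assume H: "ws \<noteq> [] \<and> walk Z u p (hd ws) \<and> chainwalk Z ws Qs"
  show "chainwalk Z (u # ws) (p # Qs)"
    unfolding chainwalk_def
  proof (intro conjI allI impI)
    show "length (u # ws) = Suc (length (p # Qs))" using H by (simp add: chainwalk_def)
    fix j assume j: "j < length (p # Qs)"
    show "walk Z ((u # ws) ! j) ((p # Qs) ! j) ((u # ws) ! Suc j)"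
    proof (cases j)
      case 0
      have "hd ws = ws ! 0" using H by (simp add: hd_conv_nth)
      then show ?thesis using H 0 by simp
    next
      case (Suc k) then show ?thesis using H j by (simp add: chainwalk_def)
    qed
  qed
qed

lemma partition_chain: "is_nbp Z \<Longrightarrow> walk Z u (concat Ps) v \<Longrightarrow> \<forall>p\<in>set Ps. p\<noteq>[] \<Longrightarrow> Ps\<noteq>[] \<Longrightarrow>
  chainwalk Z (u # map (\<lambda>p. head Z (last p)) (butlast Ps) @ [v]) Ps"
proof (induction Ps arbitrary: u)
  case Nil thus ?case by simp
next
  case (Cons p Ps)
  show ?case
  proof (cases "Ps = []")
    case True
    have "walk Z u p v" using Cons.prems(2) True by simp
    then have "chainwalk Z [u, v] [p]" unfolding chainwalk_def
      by (auto simp: less_Suc_eq)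
    then show ?thesis using True by simp
  next
    case False
    from Cons.prems(2) have "walk Z u (p @ concat Ps) v" by simp
    then obtain w where w1: "walk Z u p w" and w2: "walk Z w (concat Ps) v"
      using walk_append2[OF _ Cons.prems(1)] by blast
    have pne: "p \<noteq> []" using Cons.prems(3) by simp
    have hw: "w = head Z (last p)" using walk_last_head[OF w1 pne] .
    have pne2: "\<forall>p\<in>set Ps. p \<noteq> []" using Cons.prems(3) by simp
    have IH: "chainwalk Z (w # map (\<lambda>p. head Z (last p)) (butlast Ps) @ [v]) Ps"
      using Cons.IH[OF Cons.prems(1) w2 pne2 False] .
    have bl: "butlast (p # Ps) = p # butlast Ps" using False by simp
    have "chainwalk Z (u # (w # map (\<lambda>p. head Z (last p)) (butlast Ps) @ [v])) (p # Ps)"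
      apply (rule chainwalk_Cons[THEN iffD2])
      apply (intro conjI)
        apply simp
       apply (simp only: list.sel(1))
       apply (rule w1)
      apply (rule IH)
      done
    then show ?thesis unfolding bl list.map(2) append_Cons hw[symmetric] .
  qed
qed

lemma chainwalk_concat: "is_nbp Z \<Longrightarrow> chainwalk Z ws Qs \<Longrightarrow> hd ws \<in> verts Z \<Longrightarrow>
   walk Z (hd ws) (concat Qs) (last ws)"
proof (induction Qs arbitrary: ws)
  case Nil then show ?case by (cases ws) (auto simp: chainwalk_def)
next
  case (Cons p Qs)
  obtain u ws' where ws: "ws = u # ws'" using Cons.prems(2) by (cases ws) (auto simp: chainwalk_def)
  with Cons.prems(2) have h: "ws' \<noteq> []" "walk Z u p (hd ws')" "chainwalk Z ws' Qs"
    by (auto simp: chainwalk_Cons)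
  then have "hd ws' \<in> verts Z" using walk_verts[OF Cons.prems(1) h(2)] by blast
  then have "walk Z (hd ws') (concat Qs) (last ws')" using Cons.IH Cons.prems(1) h by blast
  then show ?case using ws h walk_append1 by auto
qed

lemma chainwalk_visits: "chainwalk Z ws Qs \<Longrightarrow> set ws \<subseteq> set (hd ws # map (head Z) (concat Qs))"
proof (induction Qs arbitrary: ws)
  case Nil then show ?case by (cases ws) (auto simp: chainwalk_def)
next
  case (Cons p Qs)
  obtain u ws' where ws: "ws = u # ws'" using Cons.prems by (cases ws) (auto simp: chainwalk_def)
  with Cons.prems have h: "ws' \<noteq> []" "walk Z u p (hd ws')" "chainwalk Z ws' Qs"
    by (auto simp: chainwalk_Cons)
  have "hd ws' \<in> set (u # map (head Z) p)" using walk_last_in h(2) .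
  moreover have "set ws' \<subseteq> set (hd ws' # map (head Z) (concat Qs))" using Cons.IH h(3) .
  ultimately show ?case using ws by auto
qed

lemma chainwalk_mix: "chainwalk Z ws Qs \<Longrightarrow> chainwalk Z ws Rs \<Longrightarrow>
  chainwalk Z ws (map (\<lambda>j. if f j then Qs!j else Rs!j) [0..<length Qs])"
  unfolding chainwalk_def by auto

lemma chain_reach: "is_nbp Z \<Longrightarrow> chainwalk Z ws Qs \<Longrightarrow> \<forall>p\<in>set Qs. p \<noteq> [] \<Longrightarrow>
  sorted_wrt (reach Z) ws"
proof (induction Qs arbitrary: ws)
  case Nil then show ?case by (cases ws) (auto simp: chainwalk_def)
next
  case (Cons p Qs)
  obtain u ws' where ws: "ws = u # ws'" using Cons.prems(2) by (cases ws) (auto simp: chainwalk_def)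
  with Cons.prems(2) have h: "ws' \<noteq> []" "walk Z u p (hd ws')" "chainwalk Z ws' Qs"
    by (auto simp: chainwalk_Cons)
  have s: "sorted_wrt (reach Z) ws'" using Cons.IH Cons.prems h(3) by auto
  have hv: "hd ws' \<in> verts Z" using walk_verts[OF Cons.prems(1) h(2)] by blast
  have wk: "walk Z (hd ws') (concat Qs) (last ws')" using chainwalk_concat Cons.prems(1) h(3) hv by blast
  have "reach Z u y" if y: "y \<in> set ws'" for y
  proof -
    have "y \<in> set (hd ws' # map (head Z) (concat Qs))" using chainwalk_visits h(3) y by blast
    then obtain Q1 where "walk Z (hd ws') Q1 y" using walk_split[OF Cons.prems(1) wk] by blast
    then have "walk Z u (p @ Q1) y" using walk_append1[OF h(2)] by blast
    moreover have "p \<noteq> []" using Cons.prems(3) by simp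
    ultimately show ?thesis unfolding reach_def by (intro exI[of _ "p @ Q1"]) auto
  qed
  then show ?case using s ws by simp
qed

lemma decomp: "is_nbp Z \<Longrightarrow> walk Z u Q v \<Longrightarrow> set xs \<subseteq> set (u # map (head Z) Q) \<Longrightarrow>
  sorted_wrt (reach Z) (u # xs @ [v]) \<Longrightarrow>
  \<exists>Qs. length Qs = Suc (length xs) \<and> concat Qs = Q \<and> chainwalk Z (u # xs @ [v]) Qs"
proof (induction xs arbitrary: u Q)
  case Nil then show ?case by (intro exI[of _ "[Q]"]) (auto simp: chainwalk_def)
next
  case (Cons x xs)
  have "x \<in> set (u # map (head Z) Q)" using Cons.prems(3) by simp
  then obtain Q1 Q2 where q: "Q = Q1 @ Q2" "walk Z u Q1 x" "walk Z x Q2 v"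
    using walk_split[OF Cons.prems(1,2)] by blast
  have inq2: "y \<in> set (x # map (head Z) Q2)" if y: "y \<in> set xs" for y
  proof (rule ccontr)
    assume nn: "y \<notin> set (x # map (head Z) Q2)"
    have "y \<in> set (u # map (head Z) Q)" using y Cons.prems(3) by auto
    then have "y \<in> set (u # map (head Z) Q1)" using nn q(1) by auto
    then obtain Q1a Q1b where "walk Z y Q1b x" using walk_split[OF Cons.prems(1) q(2)] by blast
    moreover have "reach Z x y" using Cons.prems(4) y by simp
    then obtain es where "es \<noteq> []" "walk Z x es y" unfolding reach_def by blast
    ultimately have "walk Z x (es @ Q1b) x" "es @ Q1b \<noteq> []" using walk_append1 by auto
    then show False using acyc[OF Cons.prems(1)] by blast
  qed
  have "sorted_wrt (reach Z) (x # xs @ [v])" using Cons.prems(4) by simp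
  then obtain Qs where Qs: "length Qs = Suc (length xs)" "concat Qs = Q2" "chainwalk Z (x # xs @ [v]) Qs"
    using Cons.IH[OF Cons.prems(1) q(3)] inq2 by blast
  have a: "chainwalk Z (u # (x # xs @ [v])) (Q1 # Qs)"
    unfolding chainwalk_Cons using Qs(3) q(2) by simp
  have b: "concat (Q1 # Qs) = Q" using Qs(2) q(1) by simp
  have c: "length (Q1 # Qs) = Suc (length (x # xs))" using Qs(1) by simp
  show ?case
    apply (rule exI[of _ "Q1 # Qs"])
    apply (intro conjI)
      apply (rule c)
     apply (rule b)
    unfolding append_Cons by (rule a)
qed

lemma cnt_pos: "e \<in> set L \<Longrightarrow> P e \<Longrightarrow> length (filter P L) > 0"
  by (induction L) auto

lemma cnt_pos_ex: "length (filter P L) > 0 \<Longrightarrow> \<exists>e\<in>set L. P e"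
  by (induction L) (auto split: if_splits)

lemma sum_swap:
  fixes f g :: "nat \<Rightarrow> nat"
  assumes "j < n" "(\<Sum>i<n. if i \<noteq> j then f i else g i) = (\<Sum>i<n. f i)"
  shows "g j = f j"
proof -
  have a: "(\<Sum>i<n. if i \<noteq> j then f i else g i) = g j + (\<Sum>i\<in>{..<n}-{j}. if i \<noteq> j then f i else g i)"
    using assms(1) by (subst sum.remove[of _ j]) auto
  have b: "(\<Sum>i\<in>{..<n}-{j}. if i \<noteq> j then f i else g i) = (\<Sum>i\<in>{..<n}-{j}. f i)"
    by (rule sum.cong) auto
  have c: "(\<Sum>i<n. f i) = f j + (\<Sum>i\<in>{..<n}-{j}. f i)"
    using assms(1) by (subst sum.remove[of _ j]) auto
  show ?thesis using a b c assms(2) by simp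
qed

lemma sum_list_map_upt: "(\<Sum>i\<leftarrow>[0..<n]. h i) = (\<Sum>i<n. (h i :: nat))"
  by (simp add: sum_set_upt_conv_sum_list_nat[symmetric] atLeast0LessThan)

lemma comp_lit: "computational Z Q \<Longrightarrow> l \<in> A Z Q \<Longrightarrow> l' \<in> A Z Q \<Longrightarrow> var l = var l' \<Longrightarrow> l = l'"
  unfolding computational_def by (cases l; cases l') auto


theorem lemma6:
  fixes Z :: "('v, 'e, 'x) nbp" and d :: nat
    and X :: "'v set" and Y1 Y2 Y1' Y2' :: "'x set" and S :: "'x lit set"
    and Q' Q'' :: "'e list"
  assumes "is_nbp Z" and "uniform_read Z d"
    and "Y1 \<subseteq> Vars Z" and "Y2 \<subseteq> Vars Z" and "Y1 \<inter> Y2 = {}"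
    and "separates Z X Y1 Y2"
    and "Y1' \<subseteq> Y1" and "Y2' \<subseteq> Y2"
    and "assignment S (Vars Z - (Y1 \<union> Y2))"
    and "ss_path Z Q'" and "computational Z Q'" and "X \<subseteq> set (pverts Z Q')"
    and "ss_path Z Q''" and "computational Z Q''" and "X \<subseteq> set (pverts Z Q'')"
    and "S \<subseteq> A Z Q' \<inter> A Z Q''"
    and "\<forall>x\<in>Y1'. Neg x \<in> A Z Q'"
    and "\<forall>x\<in>Y2'. Neg x \<in> A Z Q''"
  shows "\<exists>Q. ss_path Z Q \<and> computational Z Q \<and> X \<subseteq> set (pverts Z Q)
           \<and> S \<subseteq> A Z Q \<and> (\<forall>x\<in>Y1' \<union> Y2'. Neg x \<in> A Z Q)"
proof -
  note nbp = assms(1)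
  from assms(6) obtain P Ps where P: "ss_path Z P" "computational Z P" "X \<subseteq> set (pverts Z P)"
      "partition_gen Z P X Ps" and alt: "alternating Z Ps Y1 Y2 \<or> alternating Z Ps Y2 Y1"
    unfolding separates_def by blast
  define n where "n = length Ps"
  have "\<exists>sel. \<forall>i<n. \<forall>e\<in>set (Ps!i). (\<forall>x\<in>Y1. labels_var Z x e \<longrightarrow> sel i)
           \<and> (\<forall>x\<in>Y2. labels_var Z x e \<longrightarrow> \<not> sel i)"
  proof (cases "alternating Z Ps Y1 Y2")
    case True
    then have H: "\<forall>i<n. \<forall>e\<in>set (Ps!i). (\<forall>x\<in>Y1. labels_var Z x e \<longrightarrow> even i)
       \<and> (\<forall>x\<in>Y2. labels_var Z x e \<longrightarrow> odd i)" unfolding alternating_def n_def .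
    show ?thesis by (rule exI[of _ "\<lambda>i. even i"]) (rule H)
  next
    case False then have "alternating Z Ps Y2 Y1" using alt by blast
    then have H: "\<forall>i<n. \<forall>e\<in>set (Ps!i). (\<forall>x\<in>Y2. labels_var Z x e \<longrightarrow> even i)
       \<and> (\<forall>x\<in>Y1. labels_var Z x e \<longrightarrow> odd i)" unfolding alternating_def n_def .
    show ?thesis apply (rule exI[of _ "\<lambda>i. odd i"]) unfolding not_not using H by fast
  qed
  then obtain sel where sel0: "\<forall>i<n. \<forall>e\<in>set (Ps!i). (\<forall>x\<in>Y1. labels_var Z x e \<longrightarrow> sel i)
           \<and> (\<forall>x\<in>Y2. labels_var Z x e \<longrightarrow> \<not> sel i)" by (rule exE)
  have sel: "\<And>i e x. i < n \<Longrightarrow> e \<in> set (Ps!i) \<Longrightarrow> x \<in> Y1 \<Longrightarrow> labels_var Z x e \<Longrightarrow> sel i"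
     "\<And>i e x. i < n \<Longrightarrow> e \<in> set (Ps!i) \<Longrightarrow> x \<in> Y2 \<Longrightarrow> labels_var Z x e \<Longrightarrow> \<not> sel i"
    using sel0 by blast+
  define xs where "xs = map (\<lambda>p. head Z (last p)) (butlast Ps)"
  define ws where "ws = src Z # xs @ [snk Z]"
  have Pc: "concat Ps = P" using P(4) unfolding partition_gen_def by (elim conjE) assumption
  have Pne: "\<forall>p\<in>set Ps. p \<noteq> []" using P(4) unfolding partition_gen_def by (elim conjE) assumption
  have Pn: "n = card X + 1" using P(4) unfolding partition_gen_def n_def by (elim conjE) assumption
  have Xs: "set xs = X" using P(4) unfolding partition_gen_def xs_def by (elim conjE) assumption
  have Pnn: "Ps \<noteq> []" using Pn n_def by auto
  have cwP: "chainwalk Z ws Ps" unfolding ws_def xs_def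
    using partition_chain[OF nbp _ Pne Pnn] P(1) Pc unfolding ss_path_def by auto
  have srt: "sorted_wrt (reach Z) ws" using chain_reach[OF nbp cwP Pne] .
  have lxs: "Suc (length xs) = n" using Pnn unfolding xs_def n_def by simp
  obtain Q1s where Q1s: "length Q1s = n" "concat Q1s = Q'" "chainwalk Z ws Q1s"
    using decomp[OF nbp, of "src Z" Q' "snk Z" xs] assms(10,12) srt Xs lxs
    unfolding ws_def ss_path_def pverts_def by auto
  obtain Q2s where Q2s: "length Q2s = n" "concat Q2s = Q''" "chainwalk Z ws Q2s"
    using decomp[OF nbp, of "src Z" Q'' "snk Z" xs] assms(13,15) srt Xs lxs
    unfolding ws_def ss_path_def pverts_def by auto
  have hdws: "hd ws = src Z" "last ws = snk Z" by (simp_all add: ws_def)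
  have srcv: "src Z \<in> verts Z" using nbp_src[OF nbp] .
  define cnt where "cnt x L = length (filter (labels_var Z x) L)" for x L
  have cntd: "cnt x Q = d" if "ss_path Z Q" "x \<in> Vars Z" for x Q
    using assms(2) that unfolding uniform_read_def cnt_def by blast
  have cntc: "cnt x (concat (map h [0..<n])) = (\<Sum>i<n. cnt x (h i))" for x h
    unfolding cnt_def cnt_concat by (simp add: sum_list_map_upt)
  have cnteq: "cnt x (Rs!j) = cnt x (Ps!j)"
    if "chainwalk Z ws Rs" "length Rs = n" "j < n" "x \<in> Vars Z" for Rs j x
  proof -
    define Ms where "Ms = map (\<lambda>i. if i \<noteq> j then Ps!i else Rs!i) [0..<n]"
    have "chainwalk Z ws Ms" unfolding Ms_def using chainwalk_mix[OF cwP that(1)] n_def by simp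
    then have "walk Z (src Z) (concat Ms) (snk Z)" using chainwalk_concat[OF nbp] hdws srcv by metis
    then have "cnt x (concat Ms) = d" using cntd that(4) unfolding ss_path_def by blast
    moreover have "cnt x P = d" using cntd P(1) that(4) by blast
    moreover have "cnt x (concat Ms) = (\<Sum>i<n. if i \<noteq> j then cnt x (Ps!i) else cnt x (Rs!i))"
      unfolding Ms_def cntc by (rule sum.cong) auto
    moreover have "P = concat (map (\<lambda>i. Ps!i) [0..<n])" using Pc n_def map_nth by metis
    then have "cnt x P = (\<Sum>i<n. cnt x (Ps!i))" using cntc by simp
    ultimately show ?thesis using sum_swap[OF that(3)] by metis
  qed
  define Cs where "Cs = map (\<lambda>i. if sel i then Q1s!i else Q2s!i) [0..<n]"
  define Qs where "Qs = concat Cs"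
  have cwC: "chainwalk Z ws Cs" unfolding Cs_def using chainwalk_mix[OF Q1s(3) Q2s(3)] Q1s(1) by simp
  have wQ: "walk Z (src Z) Qs (snk Z)" unfolding Qs_def
    using chainwalk_concat[OF nbp cwC] hdws srcv by metis
  have ssQ: "ss_path Z Qs" using wQ unfolding ss_path_def .
  have XQ: "X \<subseteq> set (pverts Z Qs)"
    using chainwalk_visits[OF cwC] hdws Xs unfolding pverts_def Qs_def ws_def by auto
  have inC: "\<exists>i<n. e \<in> set (if sel i then Q1s!i else Q2s!i)" if "e \<in> set Qs" for e
    using that unfolding Qs_def Cs_def by auto
  have sub1: "set (Q1s!i) \<subseteq> set Q'" if "i < n" for i
  proof -
    have "Q1s!i \<in> set Q1s" using Q1s(1) that by simp
    then show ?thesis using Q1s(2) by auto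
  qed
  have sub2: "set (Q2s!i) \<subseteq> set Q''" if "i < n" for i
  proof -
    have "Q2s!i \<in> set Q2s" using Q2s(1) that by simp
    then show ?thesis using Q2s(2) by auto
  qed
  have z1: "\<not> labels_var Z x e" if "i < n" "\<not> sel i" "x \<in> Y1" "e \<in> set (Q2s!i)" for i x e
  proof
    assume lb: "labels_var Z x e"
    have xv: "x \<in> Vars Z" using that(3) assms(3) by blast
    have "cnt x (Ps!i) = 0" unfolding cnt_def using sel(1)[OF that(1) _ that(3)] that(2)
      by (auto simp: filter_empty_conv)
    then have "cnt x (Q2s!i) = 0" using cnteq[OF Q2s(3) Q2s(1) that(1) xv] by simp
    then show False using lb that(4) unfolding cnt_def by (auto simp: filter_empty_conv)
  qed
  have z2: "\<not> labels_var Z x e" if "i < n" "sel i" "x \<in> Y2" "e \<in> set (Q1s!i)" for i x e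
  proof
    assume lb: "labels_var Z x e"
    have xv: "x \<in> Vars Z" using that(3) assms(4) by blast
    have "cnt x (Ps!i) = 0" unfolding cnt_def using sel(2)[OF that(1) _ that(3)] that(2)
      by (auto simp: filter_empty_conv)
    then have "cnt x (Q1s!i) = 0" using cnteq[OF Q1s(3) Q1s(1) that(1) xv] by simp
    then show False using lb that(4) unfolding cnt_def by (auto simp: filter_empty_conv)
  qed
  have K0: "e \<in> set Q' \<or> e \<in> set Q''" if h: "e \<in> set Qs" for e
  proof -
    obtain i where i: "i < n" "e \<in> set (if sel i then Q1s!i else Q2s!i)" using inC[OF h] by blast
    show ?thesis
    proof (cases "sel i")
      case True then have "e \<in> set (Q1s!i)" using i(2) by simp
      then show ?thesis using sub1[OF i(1)] by blast
    next
      case False then have "e \<in> set (Q2s!i)" using i(2) by simp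
      then show ?thesis using sub2[OF i(1)] by blast
    qed
  qed
  have K1: "e \<in> set Q'" if h: "e \<in> set Qs" "x \<in> Y1" "labels_var Z x e" for e x
  proof -
    obtain i where i: "i < n" "e \<in> set (if sel i then Q1s!i else Q2s!i)" using inC[OF h(1)] by blast
    show ?thesis
    proof (cases "sel i")
      case True then have "e \<in> set (Q1s!i)" using i(2) by simp
      then show ?thesis using sub1[OF i(1)] by blast
    next
      case False then have "e \<in> set (Q2s!i)" using i(2) by simp
      then have "\<not> labels_var Z x e" using z1[OF i(1) False h(2)] by blast
      then show ?thesis using h(3) by blast
    qed
  qed
  have K2: "e \<in> set Q''" if h: "e \<in> set Qs" "x \<in> Y2" "labels_var Z x e" for e x
  proof -
    obtain i where i: "i < n" "e \<in> set (if sel i then Q1s!i else Q2s!i)" using inC[OF h(1)] by blast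
    show ?thesis
    proof (cases "sel i")
      case True then have "e \<in> set (Q1s!i)" using i(2) by simp
      then have "\<not> labels_var Z x e" using z2[OF i(1) True h(2)] by blast
      then show ?thesis using h(3) by blast
    next
      case False then have "e \<in> set (Q2s!i)" using i(2) by simp
      then show ?thesis using sub2[OF i(1)] by blast
    qed
  qed
  have occ: "\<exists>e\<in>set Qs. labels_var Z x e" if h: "x \<in> Vars Z" "l \<in> A Z Q'" "var l = x" for x l
  proof -
    obtain e0 where e0: "e0 \<in> set Q'" "lab Z e0 = Some l" using h(2) unfolding A_def by blast
    then have "labels_var Z x e0" using h(3) unfolding labels_var_def by blast
    then have "cnt x Q' > 0" unfolding cnt_def using cnt_pos e0(1) by metis
    then have "cnt x Qs > 0" using cntd[OF assms(10) h(1)] cntd[OF ssQ h(1)] by simp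
    then show ?thesis unfolding cnt_def by (rule cnt_pos_ex)
  qed
  have AQ: "l \<in> A Z Qs \<longleftrightarrow> (\<exists>e\<in>set Qs. lab Z e = Some l)" for l unfolding A_def by blast
  have AQ': "lab Z e = Some l \<Longrightarrow> e \<in> set Q' \<Longrightarrow> l \<in> A Z Q'" for e l unfolding A_def by blast
  have AQ'': "lab Z e = Some l \<Longrightarrow> e \<in> set Q'' \<Longrightarrow> l \<in> A Z Q''" for e l unfolding A_def by blast
  have edQ: "set Qs \<subseteq> edges Z" using walk_edges[OF wQ] .
  have compQ: "computational Z Qs"
    unfolding computational_def
  proof (rule notI, elim exE conjE)
    fix x assume p: "Pos x \<in> A Z Qs" and m: "Neg x \<in> A Z Qs"
    obtain e1 where e1: "e1 \<in> set Qs" "lab Z e1 = Some (Pos x)" using p AQ by blast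
    obtain e2 where e2: "e2 \<in> set Qs" "lab Z e2 = Some (Neg x)" using m AQ by blast
    have l1: "labels_var Z x e1" "labels_var Z x e2" using e1 e2 unfolding labels_var_def by auto
    have xv: "x \<in> Vars Z" using e1 edQ unfolding Vars_def by force
    show False
    proof (cases "x \<in> Y1")
      case True
      then have "Pos x \<in> A Z Q'" "Neg x \<in> A Z Q'" using K1 e1 e2 l1 AQ' by blast+
      then show False using assms(11) unfolding computational_def by blast
    next
      case n1: False
      show False
      proof (cases "x \<in> Y2")
        case True
        then have "Pos x \<in> A Z Q''" "Neg x \<in> A Z Q''" using K2 e1 e2 l1 AQ'' by blast+
        then show False using assms(14) unfolding computational_def by blast
      next
        case False
        then have "x \<in> Vars Z - (Y1 \<union> Y2)" using xv n1 by blast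
        then have "Pos x \<in> S \<or> Neg x \<in> S" using assms(9) unfolding assignment_def by blast
        then show False
        proof
          assume "Pos x \<in> S"
          then have "Pos x \<in> A Z Q'" "Pos x \<in> A Z Q''" using assms(16) by blast+
          moreover have "Neg x \<in> A Z Q' \<or> Neg x \<in> A Z Q''" using K0 e2 AQ' AQ'' by blast
          ultimately show False using assms(11,14) unfolding computational_def by blast
        next
          assume "Neg x \<in> S"
          then have "Neg x \<in> A Z Q'" "Neg x \<in> A Z Q''" using assms(16) by blast+
          moreover have "Pos x \<in> A Z Q' \<or> Pos x \<in> A Z Q''" using K0 e1 AQ' AQ'' by blast
          ultimately show False using assms(11,14) unfolding computational_def by blast
        qed
      qed
    qed
  qed
  have SQ: "S \<subseteq> A Z Qs"
  proof
    fix l assume lS: "l \<in> S"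
    have xv: "var l \<in> Vars Z" using lS assms(9) unfolding assignment_def by blast
    have l1: "l \<in> A Z Q'" "l \<in> A Z Q''" using lS assms(16) by blast+
    obtain e where e: "e \<in> set Qs" "labels_var Z (var l) e" using occ[OF xv l1(1) refl] by blast
    then obtain l' where l': "lab Z e = Some l'" "var l' = var l" unfolding labels_var_def by blast
    have "l' \<in> A Z Q' \<or> l' \<in> A Z Q''" using K0 e(1) l'(1) AQ' AQ'' by blast
    then have "l' = l" using comp_lit[OF assms(11)] comp_lit[OF assms(14)] l1 l'(2) by metis
    then show "l \<in> A Z Qs" using e(1) l'(1) AQ by blast
  qed
  have NQ: "Neg x \<in> A Z Qs" if "x \<in> Y1' \<union> Y2'" for x
  proof (cases "x \<in> Y1'")
    case True
    then have x1: "x \<in> Y1" "x \<in> Vars Z" "Neg x \<in> A Z Q'" using assms(3,7,17) by blast+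
    obtain e where e: "e \<in> set Qs" "labels_var Z x e" using occ[OF x1(2) x1(3)] by (metis var.simps(2))
    then obtain l' where l': "lab Z e = Some l'" "var l' = x" unfolding labels_var_def by blast
    have "e \<in> set Q'" using K1 e x1(1) by blast
    then have "l' \<in> A Z Q'" using AQ' l'(1) by blast
    then have "l' = Neg x" using comp_lit[OF assms(11)] x1(3) l'(2) by fastforce
    then show ?thesis using e(1) l'(1) AQ by blast
  next
    case False
    then have x1: "x \<in> Y2" "x \<in> Vars Z" "Neg x \<in> A Z Q''" using that assms(4,8,18) by blast+
    have "Neg x \<in> A Z Q'' \<Longrightarrow> \<exists>e\<in>set Qs. labels_var Z x e"
    proof -
      assume "Neg x \<in> A Z Q''"
      then obtain e0 where e0: "e0 \<in> set Q''" "lab Z e0 = Some (Neg x)" unfolding A_def by blast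
      then have "labels_var Z x e0" unfolding labels_var_def by simp
      then have "cnt x Q'' > 0" unfolding cnt_def using cnt_pos e0(1) by metis
      then have "cnt x Qs > 0" using cntd[OF assms(13) x1(2)] cntd[OF ssQ x1(2)] by simp
      then show ?thesis unfolding cnt_def by (rule cnt_pos_ex)
    qed
    then obtain e where e: "e \<in> set Qs" "labels_var Z x e" using x1(3) by blast
    then obtain l' where l': "lab Z e = Some l'" "var l' = x" unfolding labels_var_def by blast
    have "e \<in> set Q''" using K2 e x1(1) by blast
    then have "l' \<in> A Z Q''" using AQ'' l'(1) by blast
    then have "l' = Neg x" using comp_lit[OF assms(14)] x1(3) l'(2) by fastforce
    then show ?thesis using e(1) l'(1) AQ by blast
  qed
  show ?thesis using ssQ compQ XQ SQ NQ by blast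
qed

end
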